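(* Let $(M,\omega,f)$ be a gradient shrinking Kähler–Ricci soliton with complex structure $J$, i.e. the Riemannian metric satisfies $\mathrm{Ric}+\mathrm{Hess}(f)=\frac g2$ (equivalently $R_{i\bar j}+f_{i\bar j}=\frac12\delta_{i\bar j}$, $f_{ij}=0$ in a unitary frame), with $f$ normalized so that $S+|\nabla f|^2=f$, $S$ the scalar curvature. Put $\rho=2\sqrt f$, $e_\rho=\nabla\rho/|\nabla\rho|$ and, for a real vector $X$, $X^{1,0}=X-\sqrt{-1}JX$. At a point where $\nabla\rho\neq0$, if $\mathrm{Ric}(e_\rho^{1,0},\overline{e_\rho^{1,0}})\geq\frac{S}{f}$, then $$\mathrm{Hess}(\log\rho)\big((\nabla\rho)^{1,0},\overline{(\nabla\rho)^{1,0}}\big)\leq0.$$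
   Context: Tensors ($\mathrm{Ric}$, Hessians) are extended complex-bilinearly to $TM\otimes\mathbb{C}$; thus $\mathrm{Ric}(e_\rho^{1,0},\overline{e_\rho^{1,0}})=\mathrm{Ric}(e_\rho,e_\rho)+\mathrm{Ric}(Je_\rho,Je_\rho)$. *)

theory Defs
  imports "HOL-Analysis.Analysis"
begin

text \<open>Local coordinate model: an open set U of a Euclidean space carrying a
  Riemannian metric g (g x u v = metric at x on coordinate vectors u, v),
  an almost complex structure J, and a potential f.\<close>

definition D :: "('a::real_normed_vector \<Rightarrow> 'b::real_normed_vector) \<Rightarrow> 'a \<Rightarrow> 'a \<Rightarrow> 'b" where
  "D h x u = frechet_derivative h (at x) u"

fun Ck_on :: "nat \<Rightarrow> 'a::real_normed_vector set \<Rightarrow> ('a \<Rightarrow> 'b::real_normed_vector) \<Rightarrow> bool" where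
  "Ck_on 0 U h = continuous_on U h"
| "Ck_on (Suc k) U h = (h differentiable_on U \<and> (\<forall>u. Ck_on k U (\<lambda>x. D h x u)))"

definition smooth_on :: "'a::real_normed_vector set \<Rightarrow> ('a \<Rightarrow> 'b::real_normed_vector) \<Rightarrow> bool" where
  "smooth_on U h = (\<forall>k. Ck_on k U h)"

definition riem_metric :: "'a::euclidean_space set \<Rightarrow> ('a \<Rightarrow> 'a \<Rightarrow> 'a \<Rightarrow> real) \<Rightarrow> bool" where
  "riem_metric U g =
     ((\<forall>x\<in>U. bilinear (g x) \<and> (\<forall>u v. g x u v = g x v u) \<and> (\<forall>u. u \<noteq> 0 \<longrightarrow> g x u u > 0))
      \<and> (\<forall>u v. smooth_on U (\<lambda>x. g x u v)))"

definition raise :: "('a::euclidean_space \<Rightarrow> 'a \<Rightarrow> 'a \<Rightarrow> real) \<Rightarrow> 'a \<Rightarrow> ('a \<Rightarrow> real) \<Rightarrow> 'a" where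
  "raise g x xi = (THE z. \<forall>w. g x z w = xi w)"

definition grad :: "('a::euclidean_space \<Rightarrow> 'a \<Rightarrow> 'a \<Rightarrow> real) \<Rightarrow> ('a \<Rightarrow> real) \<Rightarrow> 'a \<Rightarrow> 'a" where
  "grad g h x = raise g x (D h x)"

text \<open>Christoffel symbols of the Levi-Civita connection (Koszul formula):
  nabla_u v = Gam x u v for constant coordinate vector fields u, v.\<close>
definition Gam :: "('a::euclidean_space \<Rightarrow> 'a \<Rightarrow> 'a \<Rightarrow> real) \<Rightarrow> 'a \<Rightarrow> 'a \<Rightarrow> 'a \<Rightarrow> 'a" where
  "Gam g x u v = raise g x (\<lambda>w. (D (\<lambda>y. g y v w) x u + D (\<lambda>y. g y u w) x v
                                   - D (\<lambda>y. g y u v) x w) / 2)"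

definition Hess :: "('a::euclidean_space \<Rightarrow> 'a \<Rightarrow> 'a \<Rightarrow> real) \<Rightarrow> ('a \<Rightarrow> real) \<Rightarrow> 'a \<Rightarrow> 'a \<Rightarrow> 'a \<Rightarrow> real" where
  "Hess g h x u v = D (\<lambda>y. D h y v) x u - D h x (Gam g x u v)"

text \<open>Curvature R(u,v)w = nabla_u nabla_v w - nabla_v nabla_u w (coordinate fields commute).\<close>
definition Riem :: "('a::euclidean_space \<Rightarrow> 'a \<Rightarrow> 'a \<Rightarrow> real) \<Rightarrow> 'a \<Rightarrow> 'a \<Rightarrow> 'a \<Rightarrow> 'a \<Rightarrow> 'a" where
  "Riem g x u v w = D (\<lambda>y. Gam g y v w) x u - D (\<lambda>y. Gam g y u w) x v
                    + Gam g x u (Gam g x v w) - Gam g x v (Gam g x u w)"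

definition Ric :: "('a::euclidean_space \<Rightarrow> 'a \<Rightarrow> 'a \<Rightarrow> real) \<Rightarrow> 'a \<Rightarrow> 'a \<Rightarrow> 'a \<Rightarrow> real" where
  "Ric g x v w = (\<Sum>b\<in>Basis. Riem g x b v w \<bullet> b)"

definition scal :: "('a::euclidean_space \<Rightarrow> 'a \<Rightarrow> 'a \<Rightarrow> real) \<Rightarrow> 'a \<Rightarrow> real" where
  "scal g x = (\<Sum>b\<in>Basis. Ric g x (raise g x (\<lambda>w. b \<bullet> w)) b)"

text \<open>Kaehler structure: g is J-invariant, J^2 = -1, and J is parallel.\<close>
definition kaehler :: "'a::euclidean_space set \<Rightarrow> ('a \<Rightarrow> 'a \<Rightarrow> 'a \<Rightarrow> real) \<Rightarrow> ('a \<Rightarrow> 'a \<Rightarrow> 'a) \<Rightarrow> bool" where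
  "kaehler U g J =
     (riem_metric U g \<and> (\<forall>u. smooth_on U (\<lambda>x. J x u)) \<and>
      (\<forall>x\<in>U. linear (J x) \<and> (\<forall>u. J x (J x u) = - u) \<and>
              (\<forall>u v. g x (J x u) (J x v) = g x u v) \<and>
              (\<forall>u v. D (\<lambda>y. J y v) x u + Gam g x u (J x v) - J x (Gam g x u v) = 0)))"

definition shrinking_KRS :: "'a::euclidean_space set \<Rightarrow> ('a \<Rightarrow> 'a \<Rightarrow> 'a \<Rightarrow> real) \<Rightarrow> ('a \<Rightarrow> 'a \<Rightarrow> 'a) \<Rightarrow> ('a \<Rightarrow> real) \<Rightarrow> bool" where
  "shrinking_KRS U g J f =
     (open U \<and> kaehler U g J \<and> smooth_on U f \<and>
      (\<forall>x\<in>U. \<forall>u v. Ric g x u v + Hess g f x u v = g x u v / 2) \<and>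
      (\<forall>x\<in>U. scal g x + g x (grad g f x) (grad g f x) = f x))"

end

theory Submission
  imports Defs
begin

lemma D_eq: "D h x = frechet_derivative h (at x)"
  by (rule ext) (simp add: D_def)

lemma D_unique: "(h has_derivative F) (at x) \<Longrightarrow> D h x = F"
  using frechet_derivative_at D_eq by metis

lemma D_works: "h differentiable (at x) \<Longrightarrow> (h has_derivative D h x) (at x)"
  using frechet_derivative_works D_eq by metis

lemma D_linear: "h differentiable (at x) \<Longrightarrow> linear (D h x)"
  using D_works has_derivative_linear by blast

lemma D_local:
  assumes "open V" "x \<in> V" "\<And>y. y \<in> V \<Longrightarrow> h1 y = h2 y"
  shows "D h1 x = D h2 x"
proof -
  have "\<And>F. (h1 has_derivative F) (at x) \<longleftrightarrow> (h2 has_derivative F) (at x)"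
    using has_derivative_transform_within_open[OF _ assms(1,2)] assms(3) by metis
  then show ?thesis unfolding D_eq frechet_derivative_def by simp
qed

lemma D_add:
  "h1 differentiable (at x) \<Longrightarrow> h2 differentiable (at x) \<Longrightarrow>
   D (\<lambda>y. h1 y + h2 y) x u = D h1 x u + D h2 x u"
  using D_unique[OF has_derivative_add[OF D_works D_works]] by metis

lemma D_cmul:
  fixes h :: "'a::real_normed_vector \<Rightarrow> real"
  shows "h differentiable (at x) \<Longrightarrow> D (\<lambda>y. c * h y) x u = c * D h x u"
  using D_unique[OF has_derivative_mult_right[OF D_works]] by metis

lemma smooth_diff:
  "smooth_on U h \<Longrightarrow> open U \<Longrightarrow> x \<in> U \<Longrightarrow> h differentiable (at x)"
  unfolding smooth_on_def
  by (metis Ck_on.simps(2) differentiable_on_eq_differentiable_at)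

lemma smooth_D: "smooth_on U h \<Longrightarrow> smooth_on U (\<lambda>x. D h x u)"
  unfolding smooth_on_def by (metis Ck_on.simps(2))

lemma raise_exists:
  fixes B :: "'a::euclidean_space \<Rightarrow> 'a \<Rightarrow> real"
  assumes bil: "bilinear B" and pos: "\<And>u. u \<noteq> 0 \<Longrightarrow> B u u > 0" and lin: "linear \<xi>"
  shows "\<exists>z. \<forall>w. B z w = \<xi> w"
proof -
  define L where "L z = (\<Sum>b\<in>Basis. B z b *\<^sub>R b)" for z
  have rep: "B z w = L z \<bullet> w" for z w
  proof -
    have "B z w = B z (\<Sum>b\<in>Basis. (w \<bullet> b) *\<^sub>R b)" by (simp add: euclidean_representation)
    also have "\<dots> = (\<Sum>b\<in>Basis. (w \<bullet> b) * B z b)"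
    proof -
      have "linear (B z)" using bil unfolding bilinear_def by simp
      then show ?thesis by (simp add: linear_sum linear_scale)
    qed
    also have "\<dots> = L z \<bullet> w" unfolding L_def by (simp add: inner_sum_left inner_sum_right inner_commute mult.commute)
    finally show ?thesis .
  qed
  have linL: "linear L"
    unfolding L_def
    by (rule linearI) (simp_all add: bil bilinear_ladd bilinear_lmul sum.distrib scaleR_sum_right scaleR_add_left)
  have "inj L"
  proof (rule linear_injective_0[THEN iffD2, OF linL], intro allI impI)
    fix z assume "L z = 0"
    then have "B z z = 0" using rep by simp
    then show "z = 0" using pos by force
  qed
  then have "surj L" using linL eucl.linear_inj_imp_surj by blast
  then obtain z where z: "L z = (\<Sum>b\<in>Basis. \<xi> b *\<^sub>R b)" by (metis surjD)
  have "\<xi> w = (\<Sum>b\<in>Basis. \<xi> b *\<^sub>R b) \<bullet> w" for w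
  proof -
    have "\<xi> w = \<xi> (\<Sum>b\<in>Basis. (w \<bullet> b) *\<^sub>R b)" by (simp add: euclidean_representation)
    also have "\<dots> = (\<Sum>b\<in>Basis. (w \<bullet> b) * \<xi> b)"
      using lin by (simp add: linear_sum linear_scale)
    also have "\<dots> = (\<Sum>b\<in>Basis. \<xi> b *\<^sub>R b) \<bullet> w" by (simp add: inner_sum_left inner_sum_right inner_commute mult.commute)
    finally show ?thesis .
  qed
  then show ?thesis using z rep by metis
qed

lemma metric_at:
  assumes "riem_metric U g" "x \<in> U"
  shows "bilinear (g x)" "\<And>u v. g x u v = g x v u" "\<And>u. u \<noteq> 0 \<Longrightarrow> g x u u > 0"
  using assms unfolding riem_metric_def by auto

lemma raise_uniq:
  assumes "riem_metric U g" "x \<in> U" "\<forall>w. g x z w = g x z' w"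
  shows "z = z'"
proof -
  have b: "bilinear (g x)" using metric_at assms by blast
  have "g x (z - z') (z - z') = 0"
    using assms(3) by (simp add: bilinear_lsub[OF b])
  then show ?thesis using metric_at(3)[OF assms(1,2), of "z - z'"] by force
qed

lemma raise_works:
  assumes "riem_metric U g" "x \<in> U" "linear \<xi>"
  shows "g x (raise g x \<xi>) w = \<xi> w"
proof -
  obtain z where z: "\<forall>w. g x z w = \<xi> w"
    using raise_exists[OF metric_at(1,3)[OF assms(1,2)] assms(3)] by blast
  have "raise g x \<xi> = z" unfolding raise_def
    by (rule the_equality) (use z raise_uniq[OF assms(1,2)] in auto)
  then show ?thesis using z by simp
qed

lemma raise_eq:
  assumes "riem_metric U g" "x \<in> U" "\<forall>w. g x z w = \<xi> w"
  shows "raise g x \<xi> = z"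
  unfolding raise_def
  by (rule the_equality) (use assms raise_uniq[OF assms(1,2)] in auto)


lemma g_diff: "riem_metric U g \<Longrightarrow> open U \<Longrightarrow> x \<in> U \<Longrightarrow> (\<lambda>y. g y u v) differentiable (at x)"
  unfolding riem_metric_def using smooth_diff by blast

lemma A_lin:
  assumes "riem_metric U g" "open U" "x \<in> U"
  shows "linear (\<lambda>w. D (\<lambda>y. g y v w) x u)"
proof (rule linearI)
  have bil: "\<And>y. y \<in> U \<Longrightarrow> bilinear (g y)" using assms(1) unfolding riem_metric_def by blast
  fix w1 w2 :: 'a and c :: real
  have "D (\<lambda>y. g y v (w1 + w2)) x = D (\<lambda>y. g y v w1 + g y v w2) x"
    by (rule D_local[OF assms(2,3)]) (simp add: bil bilinear_radd)
  then show "D (\<lambda>y. g y v (w1 + w2)) x u = D (\<lambda>y. g y v w1) x u + D (\<lambda>y. g y v w2) x u"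
    using D_add[OF g_diff[OF assms] g_diff[OF assms]] by simp
  have "D (\<lambda>y. g y v (c *\<^sub>R w1)) x = D (\<lambda>y. c * g y v w1) x"
    by (rule D_local[OF assms(2,3)]) (simp add: bil bilinear_rmul)
  then show "D (\<lambda>y. g y v (c *\<^sub>R w1)) x u = c *\<^sub>R D (\<lambda>y. g y v w1) x u"
    using D_cmul[OF g_diff[OF assms]] by simp
qed

lemma xi_lin:
  assumes "riem_metric U g" "open U" "x \<in> U"
  shows "linear (\<lambda>w. (D (\<lambda>y. g y v w) x u + D (\<lambda>y. g y u w) x v - D (\<lambda>y. g y u v) x w) / 2)"
proof -
  have l1: "linear (\<lambda>w. D (\<lambda>y. g y v w) x u)" and l2: "linear (\<lambda>w. D (\<lambda>y. g y u w) x v)"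
    using A_lin[OF assms] by blast+
  have l3: "linear (D (\<lambda>y. g y u v) x)" using D_linear g_diff[OF assms] by blast
  show ?thesis
    by (rule linearI)
       (simp_all add: linear_add[OF l1] linear_add[OF l2] linear_add[OF l3]
          linear_scale[OF l1] linear_scale[OF l2] linear_scale[OF l3] field_simps)
qed

lemma Gam_works:
  assumes "riem_metric U g" "open U" "x \<in> U"
  shows "g x (Gam g x u v) w = (D (\<lambda>y. g y v w) x u + D (\<lambda>y. g y u w) x v - D (\<lambda>y. g y u v) x w) / 2"
  unfolding Gam_def using raise_works[OF assms(1,3) xi_lin[OF assms]] by blast

lemma Gam_scale:
  assumes "riem_metric U g" "open U" "x \<in> U"
  shows "Gam g x (c *\<^sub>R u) (c *\<^sub>R u) = (c * c) *\<^sub>R Gam g x u u"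
proof -
  have bil: "\<And>y. y \<in> U \<Longrightarrow> bilinear (g y)" using assms(1) unfolding riem_metric_def by blast
  have e1: "D (\<lambda>y. g y (c *\<^sub>R u) w) x (c *\<^sub>R u) = c * c * D (\<lambda>y. g y u w) x u" for w
  proof -
    have "D (\<lambda>y. g y (c *\<^sub>R u) w) x = D (\<lambda>y. c * g y u w) x"
      by (rule D_local[OF assms(2,3)]) (simp add: bil bilinear_lmul)
    moreover have "linear (D (\<lambda>y. g y u w) x)" using D_linear g_diff[OF assms] by blast
    ultimately show ?thesis using D_cmul[OF g_diff[OF assms]] by (simp add: linear_scale)
  qed
  have e2: "D (\<lambda>y. g y (c *\<^sub>R u) (c *\<^sub>R u)) x w = c * c * D (\<lambda>y. g y u u) x w" for w
  proof -
    have "D (\<lambda>y. g y (c *\<^sub>R u) (c *\<^sub>R u)) x = D (\<lambda>y. (c * c) * g y u u) x"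
      by (rule D_local[OF assms(2,3)]) (simp add: bil bilinear_lmul bilinear_rmul)
    then show ?thesis using D_cmul[OF g_diff[OF assms]] by simp
  qed
  have b: "bilinear (g x)" using bil assms(3) by blast
  show ?thesis unfolding Gam_def[of g x "c *\<^sub>R u"]
    apply (rule raise_eq[OF assms(1,3)])
    apply (rule allI)
    subgoal for w
    proof -
      have h: "g x (Gam g x u u) w = (D (\<lambda>y. g y u w) x u + D (\<lambda>y. g y u w) x u - D (\<lambda>y. g y u u) x w) / 2"
        by (rule Gam_works[OF assms])
      show ?thesis by (simp add: h e1 e2 bilinear_lmul[OF b] algebra_simps add_divide_distrib diff_divide_distrib)
    qed
    done
qed

lemma f_diff_on:
  assumes "smooth_on U f" "open U" "y \<in> U"
  shows "f differentiable (at y)"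
  using smooth_diff assms by blast

lemma Hess_scale:
  fixes f :: "'a::euclidean_space \<Rightarrow> real"
  assumes "riem_metric U g" "open U" "x \<in> U" "smooth_on U f"
  shows "Hess g f x (c *\<^sub>R u) (c *\<^sub>R u) = c * c * Hess g f x u u"
proof -
  have "D (\<lambda>y. D f y (c *\<^sub>R u)) x = D (\<lambda>y. c * D f y u) x"
    by (rule D_local[OF assms(2,3)])
       (simp add: linear_scale[OF D_linear[OF f_diff_on[OF assms(4,2)]]])
  moreover have d: "(\<lambda>y. D f y u) differentiable (at x)"
    using smooth_diff[OF smooth_D[OF assms(4)] assms(2,3)] .
  moreover have "linear (D (\<lambda>y. D f y u) x)" using D_linear[OF d] .
  moreover have "linear (D f x)" using D_linear[OF f_diff_on[OF assms(4,2,3)]] .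
  ultimately show ?thesis unfolding Hess_def Gam_scale[OF assms(1-3)]
    using D_cmul[OF d] by (simp add: linear_scale algebra_simps)
qed

lemma quot_deriv:
  fixes k f :: "'a::real_normed_vector \<Rightarrow> real"
  assumes "(k has_derivative k') (at x)" "(f has_derivative f') (at x)" "f x \<noteq> 0"
  shows "((\<lambda>y. k y / (2 * f y)) has_derivative
          (\<lambda>z. k' z / (2 * f x) - k x * f' z / (2 * (f x)\<^sup>2))) (at x)"
  using assms
  apply -
  apply (rule derivative_eq_intros | assumption)+
  apply (auto simp: field_simps power2_eq_square)
  done


lemma Hess_log:
  fixes f :: "'a::euclidean_space \<Rightarrow> real"
  assumes "open U" "x \<in> U" "smooth_on U f" "f x > 0"
  shows "Hess g (\<lambda>y. ln (2 * sqrt (f y))) x u w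
         = Hess g f x u w / (2 * f x) - D f x w * D f x u / (2 * (f x)\<^sup>2)"
proof -
  define V where "V = U \<inter> f -` {0<..}"
  have cont: "continuous_on U f" using assms(3) unfolding smooth_on_def by (metis Ck_on.simps(1))
  have oV: "open V" unfolding V_def by (rule continuous_open_preimage[OF cont assms(1)]) simp
  have xV: "x \<in> V" unfolding V_def using assms by simp
  have Dh: "D (\<lambda>y. ln (2 * sqrt (f y))) y = (\<lambda>z. D f y z / (2 * f y))" if yV: "y \<in> V" for y
  proof -
    have fy: "f y > 0" "y \<in> U" using yV unfolding V_def by auto
    have dv: "((\<lambda>t. ln (2 * sqrt t)) has_real_derivative 1/(2 * f y)) (at (f y))"
      using fy by (auto intro!: derivative_eq_intros simp: field_simps)
    have "((\<lambda>y. ln (2 * sqrt (f y))) has_derivative (\<lambda>z. 1/(2 * f y) * D f y z)) (at y)"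
      using has_derivative_compose[OF D_works[OF f_diff_on[OF assms(3,1) fy(2)]]
          has_field_derivative_imp_has_derivative[OF dv]] by simp
    then show ?thesis using D_unique by fastforce
  qed
  have d: "(\<lambda>y. D f y w) differentiable (at x)"
    using smooth_diff[OF smooth_D[OF assms(3)] assms(1,2)] .
  have "D (\<lambda>y. D (\<lambda>y. ln (2 * sqrt (f y))) y w) x = D (\<lambda>y. D f y w / (2 * f y)) x"
    by (rule D_local[OF oV xV]) (simp add: Dh)
  also have "\<dots> = (\<lambda>z. D (\<lambda>y. D f y w) x z / (2 * f x) - D f x w * D f x z / (2 * (f x)\<^sup>2))"
    by (rule D_unique[OF quot_deriv[OF D_works[OF d] D_works[OF f_diff_on[OF assms(3,1,2)]]]])
       (use assms in simp)
  finally have e: "D (\<lambda>y. D (\<lambda>y. ln (2 * sqrt (f y))) y w) x u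
      = D (\<lambda>y. D f y w) x u / (2 * f x) - D f x w * D f x u / (2 * (f x)\<^sup>2)" by simp
  show ?thesis unfolding Hess_def e Dh[OF xV] by (simp add: diff_divide_distrib)
qed


theorem mainTheorem12:
  fixes U :: "'a::euclidean_space set"
    and g :: "'a \<Rightarrow> 'a \<Rightarrow> 'a \<Rightarrow> real"
    and J :: "'a \<Rightarrow> 'a \<Rightarrow> 'a"
    and f :: "'a \<Rightarrow> real"
    and x :: 'a
  assumes sol: "shrinking_KRS U g J f"
    and xU: "x \<in> U"
    and fpos: "f x > 0"
    and grad_nz: "grad g (\<lambda>y. 2 * sqrt (f y)) x \<noteq> 0"
    and ric: "(let v = grad g (\<lambda>y. 2 * sqrt (f y)) x;
                  e = (1 / sqrt (g x v v)) *\<^sub>R v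
              in Ric g x e e + Ric g x (J x e) (J x e)) \<ge> scal g x / f x"
  shows "(let v = grad g (\<lambda>y. 2 * sqrt (f y)) x
          in Hess g (\<lambda>y. ln (2 * sqrt (f y))) x v v
             + Hess g (\<lambda>y. ln (2 * sqrt (f y))) x (J x v) (J x v)) \<le> 0"
proof -
  have oU: "open U" and kae: "kaehler U g J" and sf: "smooth_on U f"
    and soli: "\<And>u w. Ric g x u w + Hess g f x u w = g x u w / 2"
    and sc: "scal g x + g x (grad g f x) (grad g f x) = f x"
    using sol xU unfolding shrinking_KRS_def by auto
  have rm: "riem_metric U g" using kae unfolding kaehler_def by simp
  have Jlin: "linear (J x)" and JJ: "\<And>u. J x (J x u) = - u"
    and gJ: "\<And>u w. g x (J x u) (J x w) = g x u w"
    using kae xU unfolding kaehler_def by auto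
  have b: "bilinear (g x)" and gsym: "\<And>u w. g x u w = g x w u"
    and gpos: "\<And>u. u \<noteq> 0 \<Longrightarrow> g x u u > 0"
    using metric_at[OF rm xU] by auto
  define F where "F = f x"
  define a where "a = sqrt F"
  have Fpos: "F > 0" using fpos F_def by simp
  have apos: "a > 0" and aa: "a * a = F" using Fpos a_def by auto
  have fd: "f differentiable (at x)" using f_diff_on[OF sf oU xU] .
  have linDf: "linear (D f x)" using D_linear[OF fd] .
  have dv: "((\<lambda>t. 2 * sqrt t) has_real_derivative 1 / a) (at F)"
    using Fpos unfolding a_def by (auto intro!: derivative_eq_intros simp: field_simps)
  have "((\<lambda>y. 2 * sqrt (f y)) has_derivative (\<lambda>z. 1 / a * D f x z)) (at x)"
    using has_derivative_compose[OF D_works[OF fd] has_field_derivative_imp_has_derivative[OF dv[unfolded F_def]]]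
    by simp
  then have Drho: "D (\<lambda>y. 2 * sqrt (f y)) x = (\<lambda>z. 1 / a * D f x z)" using D_unique by blast
  define v where "v = grad g (\<lambda>y. 2 * sqrt (f y)) x"
  have vnz: "v \<noteq> 0" using grad_nz v_def by simp
  have linr: "linear (\<lambda>z. 1 / a * D f x z)"
    by (rule linearI) (simp_all add: linear_add[OF linDf] linear_scale[OF linDf] algebra_simps)
  have gv: "g x v w = 1 / a * D f x w" for w
    unfolding v_def grad_def Drho using raise_works[OF rm xU linr] .
  have Dfw: "D f x w = a * g x v w" for w using gv[of w] apos by simp
  have gf: "grad g f x = a *\<^sub>R v"
    unfolding grad_def by (rule raise_eq[OF rm xU]) (simp add: bilinear_lmul[OF b] Dfw)
  define N where "N = g x v v"
  have Npos: "N > 0" using gpos[OF vnz] N_def by simp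
  define S where "S = scal g x"
  have SF: "S + F * N = F" using sc unfolding gf S_def N_def F_def[symmetric]
    by (simp add: bilinear_lmul[OF b] bilinear_rmul[OF b] aa[symmetric] algebra_simps)
  have gvJ: "g x v (J x v) = 0"
  proof -
    have "g x (J x v) (J x (J x v)) = g x v (J x v)" by (rule gJ)
    then have "- g x (J x v) v = g x v (J x v)" by (simp add: JJ bilinear_rneg[OF b])
    then show ?thesis using gsym[of "J x v" v] by simp
  qed
  have gJJ: "g x (J x v) (J x v) = N" using gJ N_def by simp
  define c where "c = 1 / sqrt N"
  have cc: "c * c = 1 / N" using Npos c_def by (simp add: real_sqrt_mult[symmetric])
  define Hv where "Hv = Hess g f x v v"
  define HJ where "HJ = Hess g f x (J x v) (J x v)"
  have Je: "J x (c *\<^sub>R v) = c *\<^sub>R J x v" using linear_scale[OF Jlin] .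
  have r1: "Ric g x (c *\<^sub>R v) (c *\<^sub>R v) = c * c * N / 2 - c * c * Hv"
    using soli[of "c *\<^sub>R v" "c *\<^sub>R v"] Hess_scale[OF rm oU xU sf, of c v]
    unfolding Hv_def N_def by (simp add: bilinear_lmul[OF b] bilinear_rmul[OF b] algebra_simps)
  have r2: "Ric g x (J x (c *\<^sub>R v)) (J x (c *\<^sub>R v)) = c * c * N / 2 - c * c * HJ"
    using soli[of "c *\<^sub>R J x v" "c *\<^sub>R J x v"] Hess_scale[OF rm oU xU sf, of c "J x v"] gJJ
    unfolding HJ_def Je by (simp add: bilinear_lmul[OF b] bilinear_rmul[OF b] algebra_simps)
  have R: "c * c * N - c * c * (Hv + HJ) \<ge> S / F"
    using ric r1 r2 unfolding Let_def v_def[symmetric] N_def[symmetric] c_def[symmetric] S_def[symmetric]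
      F_def[symmetric] by (simp add: algebra_simps)
  have S_eq: "S = F - F * N" using SF by simp
  have "F * HJ + (F * Hv + N * S) \<le> F * N"
    using R Fpos Npos unfolding cc by (simp add: field_simps)
  then have "F * (Hv + HJ) \<le> F * (N * N)" unfolding S_eq by (simp add: algebra_simps)
  then have key: "Hv + HJ \<le> N * N" using Fpos by simp
  have h1: "Hess g (\<lambda>y. ln (2 * sqrt (f y))) x v v = Hv / (2 * F) - (a * N) * (a * N) / (2 * F\<^sup>2)"
    unfolding Hess_log[OF oU xU sf fpos] Hv_def F_def[symmetric] Dfw N_def by simp
  have h2: "Hess g (\<lambda>y. ln (2 * sqrt (f y))) x (J x v) (J x v) = HJ / (2 * F)"
    unfolding Hess_log[OF oU xU sf fpos] HJ_def F_def[symmetric] Dfw gvJ by simp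
  have "Hv / (2 * F) - (a * N) * (a * N) / (2 * F\<^sup>2) + HJ / (2 * F) = (Hv + HJ - N * N) / (2 * F)"
    using Fpos aa by (simp add: field_simps power2_eq_square)
  also have "\<dots> \<le> 0" using key Fpos by (simp add: divide_nonpos_pos)
  finally show ?thesis unfolding Let_def v_def[symmetric] h1 h2 .
qed

end
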